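(* Let $f$ be an L-additive arithmetic function whose associated completely multiplicative function $h_f$ is nonzero-valued. For an arithmetic function $g$ define its derivative $g'$ by $g'(n)=\frac{g(n)f(n)}{h_f(n)}$ for $n\geq1$. Then for all arithmetic functions $g$ and $h$: (a) $(g+h)'(n)=g'(n)+h'(n)$ for all $n\geq 1$; (b) $(g\ast h)'(n)=(g'\ast h)(n)+(g\ast h')(n)$ for all $n\geq 1$.
   Context: An arithmetic function $f:\mathbb{N}\to\mathbb{C}$ is L-additive if there is a completely multiplicative function $h_f$ such that $f(mn)=f(m)h_f(n)+f(n)h_f(m)$ for all positive integers $m,n$; such an $h_f$ is fixed. $\ast$ is Dirichlet convolution $(F\ast G)(n)=\sum_{d\mid n}F(d)G(n/d)$. *)

theory Defs
  imports Complex_Main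
begin

text \<open>Arithmetic functions are modelled as functions nat => complex; only values at n >= 1 matter.\<close>

definition completely_multiplicative :: "(nat \<Rightarrow> complex) \<Rightarrow> bool" where
  "completely_multiplicative h \<longleftrightarrow> h 1 = 1 \<and> (\<forall>m n. m \<ge> 1 \<longrightarrow> n \<ge> 1 \<longrightarrow> h (m * n) = h m * h n)"

definition L_additive_with :: "(nat \<Rightarrow> complex) \<Rightarrow> (nat \<Rightarrow> complex) \<Rightarrow> bool" where
  "L_additive_with f h \<longleftrightarrow> completely_multiplicative h \<and>
     (\<forall>m n. m \<ge> 1 \<longrightarrow> n \<ge> 1 \<longrightarrow> f (m * n) = f m * h n + f n * h m)"

definition dirichlet_conv :: "(nat \<Rightarrow> complex) \<Rightarrow> (nat \<Rightarrow> complex) \<Rightarrow> nat \<Rightarrow> complex" (infixl "\<star>" 70) where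
  "dirichlet_conv F G n = (\<Sum>d | d dvd n. F d * G (n div d))"

definition L_deriv :: "(nat \<Rightarrow> complex) \<Rightarrow> (nat \<Rightarrow> complex) \<Rightarrow> (nat \<Rightarrow> complex) \<Rightarrow> nat \<Rightarrow> complex" where
  "L_deriv f h g n = g n * f n / h n"

end

theory Submission
  imports Defs
begin

theorem theorem2p7:
  fixes f hf g h :: "nat \<Rightarrow> complex"
  assumes "L_additive_with f hf"
    and "\<And>n. n \<ge> 1 \<Longrightarrow> hf n \<noteq> 0"
  shows "(\<forall>n\<ge>1. L_deriv f hf (\<lambda>k. g k + h k) n = L_deriv f hf g n + L_deriv f hf h n) \<and>
         (\<forall>n\<ge>1. L_deriv f hf (g \<star> h) n = (L_deriv f hf g \<star> h) n + (g \<star> L_deriv f hf h) n)"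
proof
  show "\<forall>n\<ge>1. L_deriv f hf (\<lambda>k. g k + h k) n = L_deriv f hf g n + L_deriv f hf h n"
    by (simp add: L_deriv_def add_divide_distrib distrib_right)
next
  have cm: "\<And>m n. m \<ge> 1 \<Longrightarrow> n \<ge> 1 \<Longrightarrow> hf (m * n) = hf m * hf n"
   and la: "\<And>m n. m \<ge> 1 \<Longrightarrow> n \<ge> 1 \<Longrightarrow> f (m * n) = f m * hf n + f n * hf m"
    using assms(1) unfolding L_additive_with_def completely_multiplicative_def by auto
  show "\<forall>n\<ge>1. L_deriv f hf (g \<star> h) n = (L_deriv f hf g \<star> h) n + (g \<star> L_deriv f hf h) n"
  proof (intro allI impI)
    fix n :: nat assume n: "n \<ge> 1"
    have key: "g d * h (n div d) * f n / hf n =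
       g d * f d / hf d * h (n div d) + g d * (h (n div d) * f (n div d) / hf (n div d))"
      if dv: "d dvd n" for d
    proof -
      obtain e where e: "n = d * e" using dv by blast
      have d1: "d \<ge> 1" and e1: "e \<ge> 1" using n e by (auto simp: Suc_le_eq)
      have ne: "n div d = e" using e d1 by simp
      have hd: "hf d \<noteq> 0" and he: "hf e \<noteq> 0" using assms(2) d1 e1 by auto
      have "g d * h e * f (d*e) / hf (d*e) =
         g d * f d / hf d * h e + g d * (h e * f e / hf e)"
        using cm[OF d1 e1] la[OF d1 e1] hd he by (simp add: field_simps)
      then show ?thesis using ne e by simp
    qed
    have "L_deriv f hf (g \<star> h) n = (\<Sum>d | d dvd n. g d * h (n div d) * f n / hf n)"
      by (simp add: L_deriv_def dirichlet_conv_def sum_divide_distrib sum_distrib_right)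
    also have "\<dots> = (\<Sum>d | d dvd n. g d * f d / hf d * h (n div d) + g d * (h (n div d) * f (n div d) / hf (n div d)))"
      by (rule sum.cong) (auto simp: key)
    also have "\<dots> = (L_deriv f hf g \<star> h) n + (g \<star> L_deriv f hf h) n"
      by (simp add: L_deriv_def dirichlet_conv_def sum.distrib)
    finally show "L_deriv f hf (g \<star> h) n = (L_deriv f hf g \<star> h) n + (g \<star> L_deriv f hf h) n" .
  qed
qed

end
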